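(* Let $M=(E,r)$ be a polymatroid with $|E|\ge2$ and let $a\in E$. Let $\underline k$ and $\overline k$ be the minimum and maximum of $p_a$ over $p\in P(M)$. Then \[ Q'_M(x,y)=(x-1)\,Q'_{M\setminus a}(x,y)+(y-1)\,Q'_{M/a}(x,y)+\sum_{k=\underline k}^{\overline k}Q'_{N_k}(x,y), \] where the sum ranges over all $a$-slices $N_k$, $\underline k\le k\le\overline k$ (including the deletion slice $k=\underline k$ and contraction slice $k=\overline k$, each counted once; if $\underline k=\overline k$ there is a single slice).
   Context: A polymatroid $M=(E,r)$ is a function $r:2^E\to\mathbb Z_{\ge0}$ with $r(\emptyset)=0$, $r$ monotone, and $r(X\cup Y)+r(X\cap Y)\le r(X)+r(Y)$. Its bases are the $\mathbf x\in\mathbb Z^E$ with $\sum_{i\in E}x_i=r(E)$ and $\sum_{i\in S}x_i\le r(S)$ for all $S$; $P(M)$ is their convex hull. For an integer $k$ with $\underline k\le k\le\overline k$, the $a$-slice $N_k$ is the polymatroid on $E\setminus\{a\}$ whose base polytope is the image, under the coordinate projection $\mathbb R^E\to\mathbb R^{E\setminus\{a\}}$, of the convex hull of the bases $p$ of $M$ with $p_a=k$. The deletion $M\setminus a$ is the slice $N_{\underline k}$ and the contraction $M/a$ is the slice $N_{\overline k}$. For a polymatroid $N$ on nonempty $F$ with base polytope $P(N)$, let $\Delta_F=\operatorname{conv}\{\mathbf e_i:i\in F\}$, $\nabla_F=-\Delta_F$, $Q_N(t,u)=\#((P(N)+u\Delta_F+t\nabla_F)\cap\mathbb Z^F)$ for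 integers $t,u\ge0$; this is a polynomial, written $Q_N(t,u)=\sum_{i,j}c_{ij}\binom{u}{j}\binom{t}{i}$, and $Q'_N(x,y)=\sum_{i,j}c_{ij}(x-1)^i(y-1)^j$. *)

theory Defs
  imports "HOL-Analysis.Analysis"
begin

text \<open>Ground sets are subsets E of a finite type 'a; the space R^E is modelled
  inside real^'a by the vectors vanishing outside E.\<close>

definition polymatroid :: "'a set \<Rightarrow> ('a set \<Rightarrow> int) \<Rightarrow> bool" where
  "polymatroid E r \<longleftrightarrow> finite E \<and> r {} = 0 \<and> (\<forall>X. X \<subseteq> E \<longrightarrow> 0 \<le> r X)
     \<and> (\<forall>X Y. X \<subseteq> Y \<and> Y \<subseteq> E \<longrightarrow> r X \<le> r Y)
     \<and> (\<forall>X Y. X \<subseteq> E \<and> Y \<subseteq> E \<longrightarrow> r (X \<union> Y) + r (X \<inter> Y) \<le> r X + r Y)"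

definition pm_bases :: "'a set \<Rightarrow> ('a set \<Rightarrow> int) \<Rightarrow> ('a \<Rightarrow> int) set" where
  "pm_bases E r = {x. (\<forall>i. i \<notin> E \<longrightarrow> x i = 0) \<and> (\<Sum>i\<in>E. x i) = r E
                      \<and> (\<forall>S. S \<subseteq> E \<longrightarrow> (\<Sum>i\<in>S. x i) \<le> r S)}"

definition int_vec :: "('a::finite \<Rightarrow> int) \<Rightarrow> real ^ 'a" where
  "int_vec x = (\<chi> i. real_of_int (x i))"

definition base_polytope :: "'a::finite set \<Rightarrow> ('a set \<Rightarrow> int) \<Rightarrow> (real ^ 'a) set" where
  "base_polytope E r = convex hull (int_vec ` pm_bases E r)"

definition proj_away :: "'a::finite \<Rightarrow> real ^ 'a \<Rightarrow> real ^ 'a" where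
  "proj_away a p = (\<chi> i. if i = a then 0 else p $ i)"

definition slice_polytope :: "'a::finite set \<Rightarrow> ('a set \<Rightarrow> int) \<Rightarrow> 'a \<Rightarrow> int \<Rightarrow> (real ^ 'a) set" where
  "slice_polytope E r a k =
     proj_away a ` (convex hull (int_vec ` {x \<in> pm_bases E r. x a = k}))"

text \<open>Standard simplex Delta_F = conv{e_i : i in F}; nabla_F = - Delta_F.\<close>
definition std_simplex :: "'a::finite set \<Rightarrow> (real ^ 'a) set" where
  "std_simplex F = convex hull ((\<lambda>i. axis i 1) ` F)"

definition Q_count :: "'a::finite set \<Rightarrow> (real ^ 'a) set \<Rightarrow> nat \<Rightarrow> nat \<Rightarrow> nat" where
  "Q_count F P t u = card {z :: real ^ 'a. (\<forall>i. i \<notin> F \<longrightarrow> z $ i = 0) \<and> (\<forall>i\<in>F. z $ i \<in> \<int>)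
      \<and> (\<exists>p d e. p \<in> P \<and> d \<in> std_simplex F \<and> e \<in> std_simplex F
               \<and> z = p + real u *\<^sub>R d + real t *\<^sub>R (- e))}"

definition Q_coeffs :: "'a::finite set \<Rightarrow> (real ^ 'a) set \<Rightarrow> nat \<Rightarrow> nat \<Rightarrow> real" where
  "Q_coeffs F P = (THE c. finite {(i, j). c i j \<noteq> 0} \<and>
      (\<forall>t u. real (Q_count F P t u) =
         (\<Sum>(i, j)\<in>{(i, j). c i j \<noteq> 0}. c i j * real (u choose j) * real (t choose i))))"

definition Q_prime :: "'a::finite set \<Rightarrow> (real ^ 'a) set \<Rightarrow> real \<Rightarrow> real \<Rightarrow> real" where
  "Q_prime F P x y = (\<Sum>(i, j)\<in>{(i, j). Q_coeffs F P i j \<noteq> 0}.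
       Q_coeffs F P i j * (x - 1) ^ i * (y - 1) ^ j)"

end

theory Submission
  imports Defs
begin


definition BZ :: "'a set \<Rightarrow> ('a set \<Rightarrow> int) \<Rightarrow> ('a \<Rightarrow> int) set" where
  "BZ E f = {z. (\<forall>i. i \<notin> E \<longrightarrow> z i = 0) \<and> (\<forall>S. S \<subseteq> E \<longrightarrow> sum z S \<le> f S) \<and> sum z E = f E}"

definition submod :: "'a set \<Rightarrow> ('a set \<Rightarrow> int) \<Rightarrow> bool" where
  "submod E f \<longleftrightarrow> (\<forall>X Y. X \<subseteq> E \<and> Y \<subseteq> E \<longrightarrow> f (X \<union> Y) + f (X \<inter> Y) \<le> f X + f Y)"

definition dl :: "'a \<Rightarrow> 'a \<Rightarrow> int" where "dl i j = (if j = i then 1 else 0)"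

lemma sum_dl: "finite S \<Longrightarrow> sum (dl i) S = (if i \<in> S then 1 else 0)"
  unfolding dl_def by (simp add: sum.delta')

lemma sum_minus_dl: "finite S \<Longrightarrow> sum (\<lambda>j. z j - dl i j) S = sum z S - (if i \<in> S then 1 else 0)"
  by (simp add: sum_subtractf sum_dl)

lemma sum_plus_dl: "finite S \<Longrightarrow> sum (\<lambda>j. z j + dl i j) S = sum z S + (if i \<in> S then 1 else 0)"
  by (simp add: sum.distrib sum_dl)

lemma L1:
  assumes fin: "finite E" and ne: "E \<noteq> {}" and sm: "submod E f" and f0: "f {} = 0"
    and z: "z \<in> BZ E (\<lambda>S. f S + (if S = {} then 0 else 1))"
  shows "\<exists>i\<in>E. (\<lambda>j. z j - dl i j) \<in> BZ E f"
proof -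
  define F where "F = (\<lambda>S. f S + (if S = {} then 0 else (1::int)))"
  have zo: "\<forall>i. i \<notin> E \<longrightarrow> z i = 0" and zle: "\<And>S. S \<subseteq> E \<Longrightarrow> sum z S \<le> F S"
    and zE: "sum z E = F E" using z unfolding BZ_def F_def by auto
  define T where "T = {X. X \<subseteq> E \<and> X \<noteq> {} \<and> sum z X = F X}"
  have ET: "E \<in> T" using zE ne unfolding T_def by auto
  have inter: "X \<inter> Y \<in> T" if "X \<in> T" "Y \<in> T" for X Y
  proof -
    have X: "X \<subseteq> E" "X \<noteq> {}" "sum z X = F X" and Y: "Y \<subseteq> E" "Y \<noteq> {}" "sum z Y = F Y"
      using that unfolding T_def by auto
    have finX: "finite X" "finite Y" using X(1) Y(1) fin finite_subset by auto
    have sub: "f (X \<union> Y) + f (X \<inter> Y) \<le> f X + f Y" using sm X(1) Y(1) unfolding submod_def by auto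
    have eq: "sum z (X \<union> Y) + sum z (X \<inter> Y) = sum z X + sum z Y"
      using sum.union_inter[OF finX] by simp
    have u: "sum z (X \<union> Y) \<le> F (X \<union> Y)" "sum z (X \<inter> Y) \<le> F (X \<inter> Y)"
      using zle X(1) Y(1) by (auto intro!: zle)
    show ?thesis
    proof (cases "X \<inter> Y = {}")
      case True
      then show ?thesis using sub eq u X Y f0 unfolding F_def by auto
    next
      case False
      then have "sum z (X \<inter> Y) = F (X \<inter> Y)" using sub eq u X Y unfolding F_def by auto
      then show ?thesis using False X(1) unfolding T_def by auto
    qed
  qed
  have finT: "finite T" unfolding T_def using fin by (auto intro: finite_subset[of _ "Pow E"])
  obtain T0 where T0: "T0 \<in> T" "\<And>X. X \<in> T \<Longrightarrow> card T0 \<le> card X"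
    using ex_has_least_nat[of "\<lambda>X. X \<in> T" E card] ET by auto
  have minT: "T0 \<subseteq> X" if "X \<in> T" for X
  proof -
    have "T0 \<inter> X \<in> T" using inter T0(1) that by auto
    then have "card T0 \<le> card (T0 \<inter> X)" using T0(2) by auto
    moreover have "finite T0" using T0(1) fin unfolding T_def by (auto intro: finite_subset)
    ultimately have "T0 \<inter> X = T0" by (meson Int_lower1 card_seteq)
    then show ?thesis by auto
  qed
  obtain i where i: "i \<in> T0" using T0(1) unfolding T_def by auto
  have iE: "i \<in> E" using i T0(1) unfolding T_def by auto
  have "(\<lambda>j. z j - dl i j) \<in> BZ E f"
    unfolding BZ_def
  proof (intro CollectI conjI allI impI)
    fix j assume "j \<notin> E" then show "z j - dl i j = 0" using zo iE unfolding dl_def by auto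
  next
    fix S assume S: "S \<subseteq> E"
    have finS: "finite S" using S fin finite_subset by auto
    show "(\<Sum>j\<in>S. z j - dl i j) \<le> f S"
    proof (cases "S \<in> T")
      case True
      then have "i \<in> S" using minT i by auto
      then show ?thesis using True finS unfolding sum_minus_dl[OF finS] T_def F_def by auto
    next
      case False
      show ?thesis
      proof (cases "S = {}")
        case True then show ?thesis using f0 by simp
      next
        case ne2: False
        then have "sum z S < F S" using False zle[OF S] S unfolding T_def by fastforce
        then show ?thesis using ne2 unfolding sum_minus_dl[OF finS] F_def by auto
      qed
    qed
  next
    show "(\<Sum>j\<in>E. z j - dl i j) = f E" using zE iE ne unfolding sum_minus_dl[OF fin] F_def by auto
  qed
  then show ?thesis using iE by auto
qed

lemma L2:
  assumes fin: "finite E" and ne: "E \<noteq> {}" and sm: "submod E f" and f0: "f {} = 0"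
    and z: "z \<in> BZ E (\<lambda>S. f S - (if S = E then 1 else 0))"
  shows "\<exists>i\<in>E. (\<lambda>j. z j + dl i j) \<in> BZ E f"
proof -
  define G where "G = (\<lambda>S. f S - (if S = E then 1 else (0::int)))"
  have zo: "\<forall>i. i \<notin> E \<longrightarrow> z i = 0" and zle: "\<And>S. S \<subseteq> E \<Longrightarrow> sum z S \<le> G S"
    and zE: "sum z E = G E" using z unfolding BZ_def G_def by auto
  define T where "T = {X. X \<subseteq> E \<and> X \<noteq> E \<and> sum z X = f X}"
  have eT: "{} \<in> T" using ne f0 unfolding T_def by auto
  have union: "X \<union> Y \<in> T" if "X \<in> T" "Y \<in> T" for X Y
  proof -
    have X: "X \<subseteq> E" "X \<noteq> E" "sum z X = f X" and Y: "Y \<subseteq> E" "Y \<noteq> E" "sum z Y = f Y"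
      using that unfolding T_def by auto
    have finX: "finite X" "finite Y" using X(1) Y(1) fin finite_subset by auto
    have sub: "f (X \<union> Y) + f (X \<inter> Y) \<le> f X + f Y" using sm X(1) Y(1) unfolding submod_def by auto
    have eq: "sum z (X \<union> Y) + sum z (X \<inter> Y) = sum z X + sum z Y"
      using sum.union_inter[OF finX] by simp
    have u: "sum z (X \<union> Y) \<le> G (X \<union> Y)" "sum z (X \<inter> Y) \<le> G (X \<inter> Y)"
      using zle X(1) Y(1) by (auto intro!: zle)
    have "X \<inter> Y \<noteq> E" using X by auto
    then have u2: "sum z (X \<inter> Y) \<le> f (X \<inter> Y)" using u unfolding G_def by auto
    show ?thesis
    proof (cases "X \<union> Y = E")
      case True
      then show ?thesis using sub eq u u2 X Y unfolding G_def by auto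
    next
      case False
      then have "sum z (X \<union> Y) = f (X \<union> Y)" using sub eq u u2 X Y unfolding G_def by auto
      then show ?thesis using False X(1) Y(1) unfolding T_def by auto
    qed
  qed
  have finT: "finite T" unfolding T_def using fin by (auto intro: finite_subset[of _ "Pow E"])
  obtain T0 where T0: "T0 \<in> T" "\<And>X. X \<in> T \<Longrightarrow> card X \<le> card T0"
  proof -
    have "T \<noteq> {}" using eT by auto
    then have "Max (card ` T) \<in> card ` T" using finT by (intro Max_in) auto
    then obtain T0 where "T0 \<in> T" "card T0 = Max (card ` T)" by auto
    then show ?thesis using that finT by (metis Max_ge finite_imageI image_eqI)
  qed
  have finT0: "finite X" if "X \<in> T" for X using that fin unfolding T_def by (auto intro: finite_subset)
  have maxT: "X \<subseteq> T0" if "X \<in> T" for X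
  proof -
    have "X \<union> T0 \<in> T" using union T0(1) that by auto
    then have "card (X \<union> T0) \<le> card T0" using T0(2) by auto
    moreover have "finite (X \<union> T0)" using finT0 \<open>X \<union> T0 \<in> T\<close> by auto
    ultimately have "T0 = X \<union> T0" by (intro card_seteq) auto
    then have "X \<union> T0 = T0" by simp
    then show ?thesis by auto
  qed
  have "T0 \<subseteq> E" "T0 \<noteq> E" using T0(1) unfolding T_def by auto
  then obtain i where iE: "i \<in> E" "i \<notin> T0" by auto
  have "(\<lambda>j. z j + dl i j) \<in> BZ E f"
    unfolding BZ_def
  proof (intro CollectI conjI allI impI)
    fix j assume "j \<notin> E" then show "z j + dl i j = 0" using zo iE unfolding dl_def by auto
  next
    fix S assume S: "S \<subseteq> E"
    have finS: "finite S" using S fin finite_subset by auto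
    show "(\<Sum>j\<in>S. z j + dl i j) \<le> f S"
    proof (cases "S = E")
      case True then show ?thesis using zE iE unfolding sum_plus_dl[OF finS] G_def by auto
    next
      case SE: False
      show ?thesis
      proof (cases "i \<in> S")
        case False then show ?thesis using zle[OF S] SE unfolding sum_plus_dl[OF finS] G_def by auto
      next
        case True
        then have "S \<notin> T" using maxT iE by auto
        then have "sum z S \<noteq> f S" using S SE unfolding T_def by auto
        moreover have "sum z S \<le> f S" using zle[OF S] SE unfolding G_def by auto
        ultimately have "sum z S < f S" by linarith
        then show ?thesis unfolding sum_plus_dl[OF finS] by auto
      qed
    qed
  next
    show "(\<Sum>j\<in>E. z j + dl i j) = f E" using zE iE unfolding sum_plus_dl[OF fin] G_def by auto
  qed
  then show ?thesis using iE by auto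
qed



definition Fn :: "'a set \<Rightarrow> ('a set \<Rightarrow> int) \<Rightarrow> nat \<Rightarrow> nat \<Rightarrow> 'a set \<Rightarrow> int" where
  "Fn E r t u S = r S + (if S = {} then 0 else int u) - (if S = E then int t else 0)"

lemma polym_submod: "polymatroid E r \<Longrightarrow> submod E r"
  unfolding polymatroid_def submod_def by auto

lemma submod_Fn: assumes "submod E r" shows "submod E (Fn E r t u)"
  unfolding submod_def
proof (intro allI impI)
  fix X Y assume XY: "X \<subseteq> E \<and> Y \<subseteq> E"
  have 1: "r (X \<union> Y) + r (X \<inter> Y) \<le> r X + r Y" using assms XY unfolding submod_def by auto
  have 2: "(if X \<union> Y = {} then 0 else int u) + (if X \<inter> Y = {} then 0 else int u)
     \<le> (if X = {} then 0 else int u) + (if Y = {} then 0 else int u)" by auto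
  have 3: "- (if X \<union> Y = E then int t else 0) - (if X \<inter> Y = E then int t else 0)
     \<le> - (if X = E then int t else 0) - (if Y = E then int t else 0)" using XY by auto
  show "Fn E r t u (X \<union> Y) + Fn E r t u (X \<inter> Y) \<le> Fn E r t u X + Fn E r t u Y"
    using 1 2 3 unfolding Fn_def by linarith
qed

lemma Fn00: "Fn E r 0 0 = r" unfolding Fn_def by auto

lemma Fn_Suc_u: "Fn E r t (Suc u) = (\<lambda>S. Fn E r t u S + (if S = {} then 0 else 1))"
  unfolding Fn_def by auto

lemma Fn_Suc_t: "Fn E r (Suc t) u = (\<lambda>S. Fn E r t u S - (if S = E then 1 else 0))"
  unfolding Fn_def by auto

lemma Fn_empty: "E \<noteq> {} \<Longrightarrow> r {} = 0 \<Longrightarrow> Fn E r t u {} = 0"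
  unfolding Fn_def by auto

lemma pm_bases_BZ: "pm_bases E r = BZ E r"
  unfolding pm_bases_def BZ_def by auto

lemma int_vec_minus_dl: "int_vec (\<lambda>j. z j - dl i j) = int_vec z - axis i 1"
  unfolding int_vec_def dl_def by (auto simp: vec_eq_iff axis_def)

lemma int_vec_plus_dl: "int_vec (\<lambda>j. z j + dl i j) = int_vec z + axis i 1"
  unfolding int_vec_def dl_def by (auto simp: vec_eq_iff axis_def)

lemma sum_upd_Suc: "(\<Sum>k<Suc t. axis ((J(t:=i)) k) (1::real)) = (\<Sum>k<t. axis (J k) 1) + axis i 1"
  by (simp add: sum.lessThan_Suc)

lemma decomp0:
  assumes pm: "polymatroid E r" and ne: "E \<noteq> {}"
  shows "z \<in> BZ E (Fn E r t 0) \<Longrightarrow> \<exists>b\<in>pm_bases E r. \<exists>J. (\<forall>k<t. J k \<in> E) \<and>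
      int_vec z = int_vec b - (\<Sum>k<t. axis (J k) 1)"
proof (induction t arbitrary: z)
  case 0
  then show ?case by (auto simp: Fn00 pm_bases_BZ)
next
  case (Suc t)
  have fin: "finite E" and r0: "r {} = 0" using pm unfolding polymatroid_def by auto
  have "\<exists>i\<in>E. (\<lambda>j. z j + dl i j) \<in> BZ E (Fn E r t 0)"
    by (rule L2[OF fin ne submod_Fn[OF polym_submod[OF pm]] Fn_empty[of E r t 0, OF ne r0]])
      (use Suc.prems in \<open>simp add: Fn_Suc_t\<close>)
  then obtain i where i: "i \<in> E" "(\<lambda>j. z j + dl i j) \<in> BZ E (Fn E r t 0)" by auto
  from Suc.IH[OF i(2)] obtain b J where bJ: "b \<in> pm_bases E r" "\<forall>k<t. J k \<in> E"
    "int_vec (\<lambda>j. z j + dl i j) = int_vec b - (\<Sum>k<t. axis (J k) 1)" by auto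
  have "int_vec z = int_vec b - (\<Sum>k<Suc t. axis ((J(t:=i)) k) 1)"
    using bJ(3) unfolding int_vec_plus_dl sum_upd_Suc by (simp add: algebra_simps)
  moreover have "\<forall>k<Suc t. (J(t:=i)) k \<in> E" using bJ(2) i(1) by auto
  ultimately show ?case using bJ(1) by blast
qed

lemma decomp:
  assumes pm: "polymatroid E r" and ne: "E \<noteq> {}"
  shows "z \<in> BZ E (Fn E r t u) \<Longrightarrow> \<exists>b\<in>pm_bases E r. \<exists>I J. (\<forall>k<u. I k \<in> E) \<and> (\<forall>k<t. J k \<in> E) \<and>
      int_vec z = int_vec b + (\<Sum>k<u. axis (I k) 1) - (\<Sum>k<t. axis (J k) 1)"
proof (induction u arbitrary: z)
  case 0
  then show ?case using decomp0[OF pm ne] by auto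
next
  case (Suc u)
  have fin: "finite E" and r0: "r {} = 0" using pm unfolding polymatroid_def by auto
  have "\<exists>i\<in>E. (\<lambda>j. z j - dl i j) \<in> BZ E (Fn E r t u)"
  proof (rule L1[OF fin ne submod_Fn[OF polym_submod[OF pm]]])
    show "Fn E r t u {} = 0" unfolding Fn_def using ne r0 by auto
    show "z \<in> BZ E (\<lambda>S. Fn E r t u S + (if S = {} then 0 else 1))"
      using Suc.prems by (simp add: Fn_Suc_u)
  qed
  then obtain i where i: "i \<in> E" "(\<lambda>j. z j - dl i j) \<in> BZ E (Fn E r t u)" by auto
  from Suc.IH[OF i(2)] obtain b I J where bJ: "b \<in> pm_bases E r" "\<forall>k<u. I k \<in> E" "\<forall>k<t. J k \<in> E"
    "int_vec (\<lambda>j. z j - dl i j) = int_vec b + (\<Sum>k<u. axis (I k) 1) - (\<Sum>k<t. axis (J k) 1)" by auto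
  have "int_vec z = int_vec b + (\<Sum>k<Suc u. axis ((I(u:=i)) k) 1) - (\<Sum>k<t. axis (J k) 1)"
    using bJ(4) unfolding int_vec_minus_dl sum_upd_Suc by (simp add: algebra_simps)
  moreover have "\<forall>k<Suc u. (I(u:=i)) k \<in> E" using bJ(2) i(1) by auto
  ultimately show ?case using bJ(1,3) by blast
qed



lemma convex_ls_le: "convex {x::real^'n. (\<Sum>i\<in>S. x$i) \<le> c}"
proof (rule convexI, simp only: mem_Collect_eq)
  fix x y :: "real^'n" and u v :: real
  assume x: "(\<Sum>i\<in>S. x$i) \<le> c" and y: "(\<Sum>i\<in>S. y$i) \<le> c" and uv0: "0 \<le> u" "0 \<le> v" "u + v = 1"
  then have uv: "0 \<le> u \<and> 0 \<le> v \<and> u + v = 1" by auto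
  have "(\<Sum>i\<in>S. (u *\<^sub>R x + v *\<^sub>R y)$i) = u * (\<Sum>i\<in>S. x$i) + v * (\<Sum>i\<in>S. y$i)"
    by (simp add: sum.distrib sum_distrib_left)
  also have "\<dots> \<le> u * c + v * c" using x y uv by (intro add_mono mult_left_mono) auto
  also have "\<dots> = c" using uv by (metis distrib_right mult_1)
  finally show "(\<Sum>i\<in>S. (u *\<^sub>R x + v *\<^sub>R y)$i) \<le> c" .
qed

lemma convex_ls_ge: "convex {x::real^'n. c \<le> (\<Sum>i\<in>S. x$i)}"
proof (rule convexI, simp only: mem_Collect_eq)
  fix x y :: "real^'n" and u v :: real
  assume x: "c \<le> (\<Sum>i\<in>S. x$i)" and y: "c \<le> (\<Sum>i\<in>S. y$i)" and uv0: "0 \<le> u" "0 \<le> v" "u + v = 1"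
  then have uv: "0 \<le> u \<and> 0 \<le> v \<and> u + v = 1" by auto
  have "(\<Sum>i\<in>S. (u *\<^sub>R x + v *\<^sub>R y)$i) = u * (\<Sum>i\<in>S. x$i) + v * (\<Sum>i\<in>S. y$i)"
    by (simp add: sum.distrib sum_distrib_left)
  moreover have "u * c + v * c \<le> u * (\<Sum>i\<in>S. x$i) + v * (\<Sum>i\<in>S. y$i)"
    using x y uv by (intro add_mono mult_left_mono) auto
  moreover have "u * c + v * c = c" using uv by (metis distrib_right mult_1)
  ultimately show "c \<le> (\<Sum>i\<in>S. (u *\<^sub>R x + v *\<^sub>R y)$i)" by linarith
qed

lemma convex_ls_eq: "convex {x::real^'n. (\<Sum>i\<in>S. x$i) = c}"
proof -
  have "{x::real^'n. (\<Sum>i\<in>S. x$i) = c} = {x. (\<Sum>i\<in>S. x$i) \<le> c} \<inter> {x. c \<le> (\<Sum>i\<in>S. x$i)}" by auto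
  then show ?thesis using convex_ls_le convex_ls_ge convex_Int by metis
qed

lemma convex_comp0: "convex {x::real^'n. x$i = 0}"
  using convex_ls_eq[of "{i}" 0] by simp

lemma hull_sub: "A \<subseteq> C \<Longrightarrow> convex C \<Longrightarrow> convex hull A \<subseteq> C"
  by (rule hull_minimal)

lemma sum_int_vec: "(\<Sum>i\<in>S. int_vec b $ i) = real_of_int (sum b S)"
  unfolding int_vec_def by simp

lemma Pfacts:
  assumes p: "p \<in> base_polytope E r"
  shows "\<And>S. S \<subseteq> E \<Longrightarrow> (\<Sum>i\<in>S. p$i) \<le> r S" "(\<Sum>i\<in>E. p$i) = r E" "\<And>i. i \<notin> E \<Longrightarrow> p$i = 0"
proof -
  fix S assume S: "S \<subseteq> E"
  have "int_vec ` pm_bases E r \<subseteq> {x. (\<Sum>i\<in>S. x$i) \<le> r S}"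
    using S unfolding pm_bases_def by (auto simp: sum_int_vec simp del: of_int_sum)
  then show "(\<Sum>i\<in>S. p$i) \<le> r S" using hull_sub[OF _ convex_ls_le] p unfolding base_polytope_def by blast
next
  have "int_vec ` pm_bases E r \<subseteq> {x. (\<Sum>i\<in>E. x$i) = r E}"
    unfolding pm_bases_def by (auto simp: sum_int_vec simp del: of_int_sum)
  then show "(\<Sum>i\<in>E. p$i) = r E" using hull_sub[OF _ convex_ls_eq] p unfolding base_polytope_def by blast
next
  fix i assume i: "i \<notin> E"
  have "int_vec ` pm_bases E r \<subseteq> {x. x$i = 0}"
    using i unfolding pm_bases_def by (auto simp: int_vec_def)
  then show "p$i = 0" using hull_sub[OF _ convex_comp0] p unfolding base_polytope_def by blast
qed

lemma sum_axis: "finite S \<Longrightarrow> (\<Sum>j\<in>S. (axis i (1::real)) $ j) = (if i \<in> S then 1 else 0)"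
  unfolding axis_def by (simp add: sum.delta')

lemma Dfacts:
  assumes d: "d \<in> std_simplex E" and fin: "finite E"
  shows "\<And>S. S \<subseteq> E \<Longrightarrow> (\<Sum>i\<in>S. d$i) \<le> 1" "\<And>S. S \<subseteq> E \<Longrightarrow> 0 \<le> (\<Sum>i\<in>S. d$i)"
    "(\<Sum>i\<in>E. d$i) = 1" "\<And>i. i \<notin> E \<Longrightarrow> d$i = 0"
proof -
  fix S assume S: "S \<subseteq> E"
  then have finS: "finite S" using fin finite_subset by auto
  have "(\<lambda>i. axis i 1) ` E \<subseteq> {x::real^'a. (\<Sum>i\<in>S. x$i) \<le> 1}"
    using finS by (auto simp: sum_axis)
  then show "(\<Sum>i\<in>S. d$i) \<le> 1" using hull_sub[OF _ convex_ls_le] d unfolding std_simplex_def by blast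
  have "(\<lambda>i. axis i 1) ` E \<subseteq> {x::real^'a. 0 \<le> (\<Sum>i\<in>S. x$i)}"
    using finS by (auto simp: sum_axis)
  then show "0 \<le> (\<Sum>i\<in>S. d$i)" using hull_sub[OF _ convex_ls_ge] d unfolding std_simplex_def by blast
next
  have "(\<lambda>i. axis i 1) ` E \<subseteq> {x::real^'a. (\<Sum>i\<in>E. x$i) = 1}"
    using fin by (auto simp: sum_axis)
  then show "(\<Sum>i\<in>E. d$i) = 1" using hull_sub[OF _ convex_ls_eq] d unfolding std_simplex_def by blast
next
  fix i assume i: "i \<notin> E"
  have "(\<lambda>i. axis i 1) ` E \<subseteq> {x::real^'a. x$i = 0}"
    using i by (auto simp: axis_def)
  then show "d$i = 0" using hull_sub[OF _ convex_comp0] d unfolding std_simplex_def by blast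
qed

lemma inj_int_vec: "inj int_vec"
  unfolding inj_def int_vec_def by (auto simp: vec_eq_iff fun_eq_iff)

lemma avg_in_simplex:
  assumes "u > 0" "\<forall>k<u. I k \<in> E"
  shows "(\<Sum>k<u. (1 / real u) *\<^sub>R axis (I k) (1::real)) \<in> std_simplex E"
  unfolding std_simplex_def
  by (rule convex_sum) (use assms in \<open>auto intro: hull_inc\<close>)

lemma exists_simplex:
  assumes "\<forall>k<u. I k \<in> E" "E \<noteq> {}"
  shows "\<exists>d\<in>std_simplex E. real u *\<^sub>R d = (\<Sum>k<u. axis (I k) (1::real))"
proof (cases "u = 0")
  case True
  obtain i where "i \<in> E" using assms by auto
  then have "axis i 1 \<in> std_simplex E" unfolding std_simplex_def by (auto intro: hull_inc)
  then show ?thesis using True by auto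
next
  case False
  then show ?thesis using avg_in_simplex[of u I E] assms
    by (intro bexI[of _ "(\<Sum>k<u. (1 / real u) *\<^sub>R axis (I k) (1::real))"]) (auto simp: scaleR_sum_right)
qed

lemma lattice_set:
  assumes pm: "polymatroid E r" and ne: "E \<noteq> {}"
  shows "{z :: real ^ 'a. (\<forall>i. i \<notin> E \<longrightarrow> z $ i = 0) \<and> (\<forall>i\<in>E. z $ i \<in> \<int>)
      \<and> (\<exists>p d e. p \<in> base_polytope E r \<and> d \<in> std_simplex E \<and> e \<in> std_simplex E
               \<and> z = p + real u *\<^sub>R d + real t *\<^sub>R (- e))} = int_vec ` BZ E (Fn E r t u)"
    (is "?L = ?R")
proof
  have fin: "finite E" and r0: "r {} = 0" using pm unfolding polymatroid_def by auto
  show "?L \<subseteq> ?R"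
  proof
    fix z assume "z \<in> ?L"
    then obtain p d e where z0: "\<forall>i. i \<notin> E \<longrightarrow> z $ i = 0" "\<forall>i\<in>E. z $ i \<in> \<int>"
      and p: "p \<in> base_polytope E r" and d: "d \<in> std_simplex E" and e: "e \<in> std_simplex E"
      and z: "z = p + real u *\<^sub>R d + real t *\<^sub>R (- e)" by auto
    define w where "w = (\<lambda>i. \<lfloor>z$i\<rfloor>)"
    have zw: "int_vec w = z"
      unfolding int_vec_def w_def vec_eq_iff
    proof
      fix i show "(\<chi> i. real_of_int \<lfloor>z $ i\<rfloor>) $ i = z $ i"
        using z0 by (cases "i \<in> E") (auto elim!: Ints_cases)
    qed
    have sw: "real_of_int (sum w S) = (\<Sum>i\<in>S. p$i) + real u * (\<Sum>i\<in>S. d$i) - real t * (\<Sum>i\<in>S. e$i)" for S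
    proof -
      have "real_of_int (sum w S) = (\<Sum>i\<in>S. z$i)" using zw sum_int_vec[of w S] by simp
      also have "\<dots> = (\<Sum>i\<in>S. p$i + real u * d$i - real t * e$i)" unfolding z by simp
      also have "\<dots> = (\<Sum>i\<in>S. p$i) + real u * (\<Sum>i\<in>S. d$i) - real t * (\<Sum>i\<in>S. e$i)"
        by (simp add: sum.distrib sum_subtractf sum_distrib_left)
      finally show ?thesis .
    qed
    have "w \<in> BZ E (Fn E r t u)"
      unfolding BZ_def
    proof (intro CollectI conjI allI impI)
      fix i assume "i \<notin> E" then show "w i = 0" using z0 unfolding w_def by auto
    next
      fix S assume S: "S \<subseteq> E"
      have "real_of_int (sum w S) \<le> real_of_int (Fn E r t u S)"
      proof (cases "S = {}")
        case True then show ?thesis using ne r0 by (simp add: Fn_def)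
      next
        case False
        have a: "(\<Sum>i\<in>S. p$i) \<le> r S" using Pfacts(1)[OF p S] .
        have b: "(\<Sum>i\<in>S. d$i) \<le> 1" using Dfacts(1)[OF d fin S] .
        have c: "0 \<le> (\<Sum>i\<in>S. e$i)" using Dfacts(2)[OF e fin S] .
        show ?thesis
        proof (cases "S = E")
          case True
          then show ?thesis using sw[of S] Pfacts(2)[OF p] Dfacts(3)[OF d fin] Dfacts(3)[OF e fin] False
            by (simp add: Fn_def)
        next
          case F2: False
          have "real u * (\<Sum>i\<in>S. d$i) \<le> real u" using b by (simp add: mult_left_le)
          moreover have "0 \<le> real t * (\<Sum>i\<in>S. e$i)" using c by simp
          ultimately show ?thesis using sw[of S] a False F2 by (simp add: Fn_def)
        qed
      qed
      then show "sum w S \<le> Fn E r t u S" by linarith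
    next
      have "real_of_int (sum w E) = real_of_int (Fn E r t u E)"
        using sw[of E] Pfacts(2)[OF p] Dfacts(3)[OF d fin] Dfacts(3)[OF e fin] ne by (simp add: Fn_def)
      then show "sum w E = Fn E r t u E" by linarith
    qed
    then show "z \<in> ?R" using zw by auto
  qed
next
  show "?R \<subseteq> ?L"
  proof
    fix z assume "z \<in> ?R"
    then obtain w where w: "w \<in> BZ E (Fn E r t u)" and z: "z = int_vec w" by auto
    obtain b I J where b: "b \<in> pm_bases E r" and IJ: "\<forall>k<u. I k \<in> E" "\<forall>k<t. J k \<in> E"
      and eq: "int_vec w = int_vec b + (\<Sum>k<u. axis (I k) 1) - (\<Sum>k<t. axis (J k) 1)"
      using decomp[OF pm ne w] by blast
    obtain d where d: "d \<in> std_simplex E" "real u *\<^sub>R d = (\<Sum>k<u. axis (I k) (1::real))"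
      using exists_simplex[OF IJ(1) ne] by auto
    obtain e where e: "e \<in> std_simplex E" "real t *\<^sub>R e = (\<Sum>k<t. axis (J k) (1::real))"
      using exists_simplex[OF IJ(2) ne] by auto
    have p: "int_vec b \<in> base_polytope E r" unfolding base_polytope_def using b by (auto intro: hull_inc)
    have "z = int_vec b + real u *\<^sub>R d + real t *\<^sub>R (- e)" using z eq d(2) e(2) by simp
    moreover have "\<forall>i. i \<notin> E \<longrightarrow> z $ i = 0" using w z unfolding BZ_def int_vec_def by auto
    moreover have "\<forall>i\<in>E. z $ i \<in> \<int>" using z unfolding int_vec_def by auto
    ultimately show "z \<in> ?L" using p d(1) e(1) by blast
  qed
qed

lemma Q_count_BZ:
  assumes pm: "polymatroid E r" and ne: "E \<noteq> {}"
  shows "Q_count E (base_polytope E r) t u = card (BZ E (Fn E r t u))"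
  unfolding Q_count_def lattice_set[OF pm ne]
  by (rule card_image) (rule inj_on_subset[OF inj_int_vec], simp)



lemma finite_BZ:
  fixes E :: "'a::finite set"
  shows "finite (BZ E F)"
proof -
  define B where "B i = (if i \<in> E then {F E - F (E - {i}) .. F {i}} else {0::int})" for i
  have "BZ E F \<subseteq> PiE UNIV B"
  proof
    fix z assume z: "z \<in> BZ E F"
    have "z i \<in> B i" for i
    proof (cases "i \<in> E")
      case True
      have fin: "finite E" by simp
      have "sum z {i} \<le> F {i}" using z True unfolding BZ_def by auto
      then have 1: "z i \<le> F {i}" by simp
      have 2: "sum z (E - {i}) \<le> F (E - {i})" using z unfolding BZ_def by auto
      have 3: "sum z E = z i + sum z (E - {i})" using True fin by (simp add: sum.remove)
      have 4: "sum z E = F E" using z unfolding BZ_def by auto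
      show ?thesis using 1 2 3 4 True unfolding B_def by auto
    next
      case False then show ?thesis using z unfolding BZ_def B_def by auto
    qed
    then show "z \<in> PiE UNIV B" by (simp add: PiE_UNIV_domain)
  qed
  moreover have "finite (PiE UNIV B)" by (rule finite_PiE) (auto simp: B_def)
  ultimately show ?thesis by (rule finite_subset)
qed

lemma fiber_bij:
  assumes fin: "finite E" and aE: "a \<in> E" and E': "E' = E - {a}" and E'ne: "E' \<noteq> {}"
    and H1: "\<And>S. S \<subseteq> E' \<Longrightarrow> S \<noteq> {} \<Longrightarrow> S \<noteq> E' \<Longrightarrow> G S = min (F S) (F (insert a S) - m)"
    and H0: "F {} \<ge> 0" "G {} = 0" "F {a} - m \<ge> 0"
    and H3: "G E' = F E - m" "F E - m \<le> F E'"
  shows "bij_betw (\<lambda>z. z(a:=0)) {z\<in>BZ E F. z a = m} (BZ E' G)"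
proof (rule bij_betw_byWitness[where f' = "\<lambda>y. y(a:=m)"])
  show "\<forall>z\<in>{z \<in> BZ E F. z a = m}. (z(a := 0))(a := m) = z" by auto
  show "\<forall>y\<in>BZ E' G. (y(a := m))(a := 0) = y" using E' unfolding BZ_def by (auto simp: fun_eq_iff)
  have aE': "a \<notin> E'" using E' by auto
  have finE': "finite E'" using fin E' by auto
  have sumS: "sum (y(a:=c)) S = sum y S" if "S \<subseteq> E'" for y c S
    using that aE' by (intro sum.cong) auto
  have sumSa: "sum (y(a:=c)) (insert a S) = c + sum y S" if "S \<subseteq> E'" "finite S" for y c S
  proof -
    have "a \<notin> S" using that aE' by auto
    then have "sum (y(a:=c)) (insert a S) = (y(a:=c)) a + sum (y(a:=c)) S" using that(2) by simp
    then show ?thesis using sumS[OF that(1), of y c] by simp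
  qed
  have EE: "E = insert a E'" using E' aE by auto
  show "(\<lambda>z. z(a := 0)) ` {z \<in> BZ E F. z a = m} \<subseteq> BZ E' G"
  proof
    fix y assume "y \<in> (\<lambda>z. z(a := 0)) ` {z \<in> BZ E F. z a = m}"
    then obtain z where z: "z \<in> BZ E F" "z a = m" and y: "y = z(a:=0)" by auto
    have zy: "z = y(a:=m)" using y z(2) by auto
    have zo: "\<And>i. i \<notin> E \<Longrightarrow> z i = 0" and zle: "\<And>S. S \<subseteq> E \<Longrightarrow> sum z S \<le> F S"
      and zE: "sum z E = F E" using z(1) unfolding BZ_def by auto
    have A: "sum y S \<le> F S" if "S \<subseteq> E'" for S
      using zle[of S] that sumS[OF that, of y m] zy E' by auto
    have B: "m + sum y S \<le> F (insert a S)" if "S \<subseteq> E'" for S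
    proof -
      have fS: "finite S" using that finE' finite_subset by auto
      have "insert a S \<subseteq> E" using that E' aE by auto
      then show ?thesis using zle[of "insert a S"] sumSa[OF that fS, of y m] zy by simp
    qed
    have C: "m + sum y E' = F E" using zE sumSa[of E' y m] finE' zy EE by auto
    show "y \<in> BZ E' G"
      unfolding BZ_def
    proof (intro CollectI conjI allI impI)
      fix i assume "i \<notin> E'" then show "y i = 0" using zo y E' by auto
    next
      fix S assume S: "S \<subseteq> E'"
      show "sum y S \<le> G S"
      proof (cases "S = {}")
        case True then show ?thesis using H0 by simp
      next
        case False
        show ?thesis
        proof (cases "S = E'")
          case True then show ?thesis using C H3 by simp
        next
          case F2: False then show ?thesis using H1[OF S False F2] A[OF S] B[OF S] by simp
        qed
      qed
    next
      show "sum y E' = G E'" using C H3 by simp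
    qed
  qed
  show "(\<lambda>y. y(a := m)) ` BZ E' G \<subseteq> {z \<in> BZ E F. z a = m}"
  proof
    fix z assume "z \<in> (\<lambda>y. y(a := m)) ` BZ E' G"
    then obtain y where y: "y \<in> BZ E' G" and z: "z = y(a:=m)" by auto
    have yo: "\<And>i. i \<notin> E' \<Longrightarrow> y i = 0" and yle: "\<And>S. S \<subseteq> E' \<Longrightarrow> sum y S \<le> G S"
      and yE: "sum y E' = G E'" using y unfolding BZ_def by auto
    have "z \<in> BZ E F"
      unfolding BZ_def
    proof (intro CollectI conjI allI impI)
      fix i assume "i \<notin> E" then show "z i = 0" using yo z E' aE by auto
    next
      fix S assume S: "S \<subseteq> E"
      show "sum z S \<le> F S"
      proof (cases "a \<in> S")
        case False
        then have S': "S \<subseteq> E'" using S E' by auto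
        have "sum z S = sum y S" using sumS[OF S'] z by simp
        moreover have "sum y S \<le> F S"
        proof (cases "S = {}")
          case True then show ?thesis using H0 by simp
        next
          case False
          show ?thesis
          proof (cases "S = E'")
            case True then show ?thesis using yE H3 by simp
          next
            case F2: False then show ?thesis using H1[OF S' False F2] yle[OF S'] by simp
          qed
        qed
        ultimately show ?thesis by simp
      next
        case True
        define S0 where "S0 = S - {a}"
        have S0: "S0 \<subseteq> E'" "S = insert a S0" using S True E' unfolding S0_def by auto
        have fS0: "finite S0" using S0(1) finE' finite_subset by auto
        have "sum z S = m + sum y S0" using sumSa[OF S0(1) fS0] z S0(2) by simp
        moreover have "m + sum y S0 \<le> F (insert a S0)"
        proof (cases "S0 = {}")
          case True then show ?thesis using H0 by simp
        next
          case False
          show ?thesis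
          proof (cases "S0 = E'")
            case True then show ?thesis using yE H3 EE by simp
          next
            case F2: False then show ?thesis using H1[OF S0(1) False F2] yle[OF S0(1)] by simp
          qed
        qed
        ultimately show ?thesis using S0(2) by simp
      qed
    next
      show "sum z E = F E" using sumSa[of E' y m] finE' z EE yE H3 by simp
    qed
    then show "z \<in> {z \<in> BZ E F. z a = m}" using z by simp
  qed
qed

lemma fiber_range:
  assumes fin: "finite E" and aE: "a \<in> E" and z: "z \<in> BZ E F"
  shows "z a \<le> F {a}" "F E - z a \<le> F (E - {a})"
proof -
  have "sum z {a} \<le> F {a}" using z aE unfolding BZ_def by auto
  then show "z a \<le> F {a}" by simp
  have "sum z E = z a + sum z (E - {a})" using aE fin by (simp add: sum.remove)
  moreover have "sum z (E - {a}) \<le> F (E - {a})" "sum z E = F E" using z unfolding BZ_def by auto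
  ultimately show "F E - z a \<le> F (E - {a})" by simp
qed



definition hs :: "('a set \<Rightarrow> int) \<Rightarrow> 'a \<Rightarrow> int \<Rightarrow> 'a set \<Rightarrow> int" where
  "hs r a k S = min (r S) (r (insert a S) - k)"

locale setting =
  fixes E :: "'a::finite set" and r :: "'a set \<Rightarrow> int" and a :: 'a
  assumes pm: "polymatroid E r" and cE: "2 \<le> card E" and aE: "a \<in> E"
begin

abbreviation "E' \<equiv> E - {a}"
abbreviation "lo \<equiv> r E - r (E - {a})"
abbreviation "hi \<equiv> r {a}"

lemma fin: "finite E" by simp
lemma r0: "r {} = 0" using pm unfolding polymatroid_def by auto
lemma mono: "X \<subseteq> Y \<Longrightarrow> Y \<subseteq> E \<Longrightarrow> r X \<le> r Y" using pm unfolding polymatroid_def by auto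
lemma nonneg: "X \<subseteq> E \<Longrightarrow> 0 \<le> r X" using pm unfolding polymatroid_def by auto
lemma sub: "X \<subseteq> E \<Longrightarrow> Y \<subseteq> E \<Longrightarrow> r (X \<union> Y) + r (X \<inter> Y) \<le> r X + r Y"
  using pm unfolding polymatroid_def by auto

lemma E'ne: "E' \<noteq> {}"
proof
  assume "E' = {}"
  then have "E \<subseteq> {a}" by auto
  then have "card E \<le> 1" using card_mono[of "{a}" E] by auto
  then show False using cE by auto
qed
lemma E'neE: "E' \<noteq> E" using aE by auto
lemma aneE: "{a} \<noteq> E" using E'ne by auto
lemma Ene: "E \<noteq> {}" using aE by auto
lemma EE: "insert a E' = E" using aE by auto

lemma K1: "S \<subseteq> E' \<Longrightarrow> r (insert a S) \<le> r S + hi"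
proof -
  assume S: "S \<subseteq> E'"
  have "S \<union> {a} = insert a S" "S \<inter> {a} = {}" using S by auto
  then show ?thesis using sub[of S "{a}"] S aE r0 by auto
qed

lemma K2: "S \<subseteq> E' \<Longrightarrow> lo \<le> r (insert a S) - r S"
proof -
  assume S: "S \<subseteq> E'"
  have "insert a S \<union> E' = E" "insert a S \<inter> E' = S" using S aE by auto
  moreover have "S \<subseteq> E" "insert a S \<subseteq> E" using S aE by auto
  ultimately have "r E + r S \<le> r (insert a S) + r E'" using sub[of "insert a S" E'] by auto
  then show ?thesis by linarith
qed

lemma lohi: "lo \<le> hi" using K2[of "{}"] r0 by auto

lemma FnS: "S \<subseteq> E' \<Longrightarrow> S \<noteq> {} \<Longrightarrow> Fn E r t u S = r S + int u" unfolding Fn_def using aE by auto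
lemma FnaS: "S \<subseteq> E' \<Longrightarrow> S \<noteq> E' \<Longrightarrow> Fn E r t u (insert a S) = r (insert a S) + int u"
  unfolding Fn_def using aE by auto
lemma Fn0: "Fn E r t u {} = 0" using Fn_empty[of E r t u, OF Ene r0] .
lemma FnE: "Fn E r t u E = r E + int u - int t" unfolding Fn_def using Ene by auto
lemma FnE': "Fn E r t u E' = r E' + int u" unfolding Fn_def using E'ne E'neE by auto
lemma Fna: "Fn E r t u {a} = hi + int u" unfolding Fn_def using aneE by auto

lemma GS: "S \<noteq> {} \<Longrightarrow> S \<noteq> E' \<Longrightarrow> Fn E' (hs r a k) t u S = hs r a k S + int u" unfolding Fn_def by auto
lemma G0: "k \<le> hi \<Longrightarrow> Fn E' (hs r a k) t u {} = 0" unfolding Fn_def hs_def using E'ne r0 by auto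
lemma GE': "Fn E' (hs r a k) t u E' = min (r E') (r E - k) + int u - int t"
  unfolding Fn_def hs_def using E'ne EE by auto

lemma fib_mid:
  assumes "lo \<le> k" "k \<le> hi"
  shows "card {z\<in>BZ E (Fn E r t u). z a = k} = card (BZ E' (Fn E' (hs r a k) t u))"
proof (rule bij_betw_same_card, rule fiber_bij[OF fin aE refl E'ne])
  fix S assume S: "S \<subseteq> E'" "S \<noteq> {}" "S \<noteq> E'"
  show "Fn E' (hs r a k) t u S = min (Fn E r t u S) (Fn E r t u (insert a S) - k)"
    using S unfolding GS[OF S(2,3)] FnS[OF S(1,2)] FnaS[OF S(1,3)] hs_def by auto
next
  show "0 \<le> Fn E r t u {}" using Fn0 by simp
  show "Fn E' (hs r a k) t u {} = 0" using G0 assms by simp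
  show "0 \<le> Fn E r t u {a} - k" using Fna assms by simp
  show "Fn E' (hs r a k) t u E' = Fn E r t u E - k" using GE' FnE assms by auto
  show "Fn E r t u E - k \<le> Fn E r t u E'" using FnE FnE' assms by auto
qed

lemma fib_hi:
  assumes "1 \<le> j" "j \<le> u"
  shows "card {z\<in>BZ E (Fn E r t u). z a = hi + int j} = card (BZ E' (Fn E' (hs r a hi) t (u - j)))"
proof (rule bij_betw_same_card, rule fiber_bij[OF fin aE refl E'ne])
  fix S assume S: "S \<subseteq> E'" "S \<noteq> {}" "S \<noteq> E'"
  have "r (insert a S) \<le> r S + hi" using K1 S by auto
  then show "Fn E' (hs r a hi) t (u - j) S = min (Fn E r t u S) (Fn E r t u (insert a S) - (hi + int j))"
    using S assms unfolding GS[OF S(2,3)] FnS[OF S(1,2)] FnaS[OF S(1,3)] hs_def by auto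
next
  have "r E \<le> r E' + hi" using K1[of E'] EE by auto
  then show "Fn E' (hs r a hi) t (u - j) E' = Fn E r t u E - (hi + int j)"
    using GE' FnE assms by auto
  show "0 \<le> Fn E r t u {}" using Fn0 by simp
  show "Fn E' (hs r a hi) t (u - j) {} = 0" using G0 by simp
  show "0 \<le> Fn E r t u {a} - (hi + int j)" using Fna assms by simp
  show "Fn E r t u E - (hi + int j) \<le> Fn E r t u E'" using FnE FnE' lohi assms by auto
qed

lemma fib_lo:
  assumes "1 \<le> j" "j \<le> t"
  shows "card {z\<in>BZ E (Fn E r t u). z a = lo - int j} = card (BZ E' (Fn E' (hs r a lo) (t - j) u))"
proof (rule bij_betw_same_card, rule fiber_bij[OF fin aE refl E'ne])
  fix S assume S: "S \<subseteq> E'" "S \<noteq> {}" "S \<noteq> E'"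
  have "lo \<le> r (insert a S) - r S" using K2 S by auto
  then show "Fn E' (hs r a lo) (t - j) u S = min (Fn E r t u S) (Fn E r t u (insert a S) - (lo - int j))"
    using S assms unfolding GS[OF S(2,3)] FnS[OF S(1,2)] FnaS[OF S(1,3)] hs_def by auto
next
  show "Fn E' (hs r a lo) (t - j) u E' = Fn E r t u E - (lo - int j)"
    using GE' FnE assms by auto
  show "0 \<le> Fn E r t u {}" using Fn0 by simp
  show "Fn E' (hs r a lo) (t - j) u {} = 0" using G0 lohi by simp
  show "0 \<le> Fn E r t u {a} - (lo - int j)" using Fna assms lohi by simp
  show "Fn E r t u E - (lo - int j) \<le> Fn E r t u E'" using FnE FnE' assms by auto
qed

lemma range:
  assumes "z \<in> BZ E (Fn E r t u)"
  shows "z a \<in> {lo - int t .. hi + int u}"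
  using fiber_range[OF fin aE assms] Fna FnE FnE' by auto

lemma img_lo: "{lo - int t..<lo} = (\<lambda>s. lo - int t + int s) ` {..<t}"
proof
  show "{lo - int t..<lo} \<subseteq> (\<lambda>s. lo - int t + int s) ` {..<t}"
  proof
    fix m assume m: "m \<in> {lo - int t..<lo}"
    then have "m = lo - int t + int (nat (m - (lo - int t)))" "nat (m - (lo - int t)) < t" by auto
    then show "m \<in> (\<lambda>s. lo - int t + int s) ` {..<t}" by blast
  qed
qed auto

lemma img_hi: "{hi<..hi + int u} = (\<lambda>s. hi + int u - int s) ` {..<u}"
proof
  show "{hi<..hi + int u} \<subseteq> (\<lambda>s. hi + int u - int s) ` {..<u}"
  proof
    fix m assume m: "m \<in> {hi<..hi + int u}"
    then have "m = hi + int u - int (nat (hi + int u - m))" "nat (hi + int u - m) < u" by auto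
    then show "m \<in> (\<lambda>s. hi + int u - int s) ` {..<u}" by blast
  qed
qed auto

lemma recursion:
  "card (BZ E (Fn E r t u)) =
     (\<Sum>s<t. card (BZ E' (Fn E' (hs r a lo) s u)))
   + (\<Sum>s<u. card (BZ E' (Fn E' (hs r a hi) t s)))
   + (\<Sum>k\<in>{lo..hi}. card (BZ E' (Fn E' (hs r a k) t u)))"
proof -
  let ?A = "BZ E (Fn E r t u)"
  let ?f = "\<lambda>m. card {z\<in>?A. z a = m}"
  have A: "?A = (\<Union>m\<in>{lo - int t .. hi + int u}. {z\<in>?A. z a = m})" using range by auto
  have "card ?A = (\<Sum>m\<in>{lo - int t .. hi + int u}. ?f m)"
    by (subst A, rule card_UN_disjoint) (auto intro: finite_subset[OF _ finite_BZ])
  also have "{lo - int t .. hi + int u} = {lo - int t..<lo} \<union> ({lo..hi} \<union> {hi<..hi + int u})"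
    using lohi by auto
  also have "(\<Sum>m\<in>\<dots>. ?f m) = (\<Sum>m\<in>{lo - int t..<lo}. ?f m) + ((\<Sum>m\<in>{lo..hi}. ?f m) + (\<Sum>m\<in>{hi<..hi + int u}. ?f m))"
  proof -
    have d1: "{lo - int t..<lo} \<inter> ({lo..hi} \<union> {hi<..hi + int u}) = {}" using lohi by auto
    have d2: "{lo..hi} \<inter> {hi<..hi + int u} = {}" by auto
    show ?thesis by (simp only: sum.union_disjoint[OF _ _ d1] sum.union_disjoint[OF _ _ d2] finite_Un finite_atLeastLessThan_int finite_atLeastAtMost_int finite_greaterThanAtMost_int simp_thms)
  qed
  also have "(\<Sum>m\<in>{lo - int t..<lo}. ?f m) = (\<Sum>s<t. card (BZ E' (Fn E' (hs r a lo) s u)))"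
  proof -
    have "(\<Sum>m\<in>{lo - int t..<lo}. ?f m) = (\<Sum>s<t. ?f (lo - int t + int s))"
      unfolding img_lo by (subst sum.reindex) (auto simp: inj_on_def)
    also have "\<dots> = (\<Sum>s<t. card (BZ E' (Fn E' (hs r a lo) s u)))"
    proof (rule sum.cong[OF refl])
      fix s assume s: "s \<in> {..<t}"
      have "lo - int t + int s = lo - int (t - s)" using s by auto
      moreover have "t - (t - s) = s" using s by auto
      ultimately show "?f (lo - int t + int s) = card (BZ E' (Fn E' (hs r a lo) s u))"
        using fib_lo[where j="t - s" and t=t and u=u] s by (simp add: algebra_simps)
    qed
    finally show ?thesis .
  qed
  also have "(\<Sum>m\<in>{hi<..hi + int u}. ?f m) = (\<Sum>s<u. card (BZ E' (Fn E' (hs r a hi) t s)))"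
  proof -
    have "(\<Sum>m\<in>{hi<..hi + int u}. ?f m) = (\<Sum>s<u. ?f (hi + int u - int s))"
      unfolding img_hi by (subst sum.reindex) (auto simp: inj_on_def)
    also have "\<dots> = (\<Sum>s<u. card (BZ E' (Fn E' (hs r a hi) t s)))"
    proof (rule sum.cong[OF refl])
      fix s assume s: "s \<in> {..<u}"
      have "hi + int u - int s = hi + int (u - s)" using s by auto
      moreover have "u - (u - s) = s" using s by auto
      ultimately show "?f (hi + int u - int s) = card (BZ E' (Fn E' (hs r a hi) t s))"
        using fib_hi[where j="u - s" and t=t and u=u] s by (simp add: algebra_simps)
    qed
    finally show ?thesis .
  qed
  also have "(\<Sum>m\<in>{lo..hi}. ?f m) = (\<Sum>k\<in>{lo..hi}. card (BZ E' (Fn E' (hs r a k) t u)))"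
    using fib_mid by (intro sum.cong) auto
  finally show ?thesis by simp
qed

lemma hs_polymatroid:
  assumes "lo \<le> k" "k \<le> hi"
  shows "polymatroid E' (hs r a k)"
  unfolding polymatroid_def
proof (intro conjI allI impI)
  show "finite E'" by simp
  show "hs r a k {} = 0" unfolding hs_def using r0 assms by auto
next
  fix X assume X: "X \<subseteq> E'"
  have "r {a} \<le> r (insert a X)" using X aE by (intro mono) auto
  moreover have "X \<subseteq> E" using X by auto
  ultimately show "0 \<le> hs r a k X" unfolding hs_def using nonneg[of X] assms by auto
next
  fix X Y assume XY: "X \<subseteq> Y \<and> Y \<subseteq> E'"
  have "r X \<le> r Y" "r (insert a X) \<le> r (insert a Y)" using XY aE by (auto intro!: mono)
  then show "hs r a k X \<le> hs r a k Y" unfolding hs_def by auto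
next
  fix X Y assume XY: "X \<subseteq> E' \<and> Y \<subseteq> E'"
  have 1: "r (X \<union> Y) + r (X \<inter> Y) \<le> r X + r Y" using XY by (intro sub) auto
  have 2: "r (insert a (X \<union> Y)) + r (insert a (X \<inter> Y)) \<le> r (insert a X) + r (insert a Y)"
    using sub[of "insert a X" "insert a Y"] XY aE by auto
  have "X \<union> insert a Y = insert a (X \<union> Y)" "X \<inter> insert a Y = X \<inter> Y" using XY by auto
  then have 3: "r (insert a (X \<union> Y)) + r (X \<inter> Y) \<le> r X + r (insert a Y)"
    using sub[of X "insert a Y"] XY aE by auto
  have "insert a X \<union> Y = insert a (X \<union> Y)" "insert a X \<inter> Y = X \<inter> Y" using XY by auto
  then have 4: "r (insert a (X \<union> Y)) + r (X \<inter> Y) \<le> r (insert a X) + r Y"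
    using sub[of "insert a X" Y] XY aE by auto
  define h where "h = hs r a k"
  have hle: "h Z \<le> r Z" "h Z \<le> r (insert a Z) - k" for Z unfolding h_def hs_def by auto
  have hcase: "h Z = r Z \<or> h Z = r (insert a Z) - k" for Z unfolding h_def hs_def by auto
  have "h (X \<union> Y) + h (X \<inter> Y) \<le> h X + h Y"
  proof (cases "h X = r X")
    case hX: True
    show ?thesis
    proof (cases "h Y = r Y")
      case True then show ?thesis using hX 1 hle[of "X \<union> Y"] hle[of "X \<inter> Y"] by linarith
    next
      case False then have "h Y = r (insert a Y) - k" using hcase by blast
      then show ?thesis using hX 3 hle[of "X \<union> Y"] hle[of "X \<inter> Y"] by linarith
    qed
  next
    case False
    then have hX: "h X = r (insert a X) - k" using hcase by blast
    show ?thesis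
    proof (cases "h Y = r Y")
      case True then show ?thesis using hX 4 hle[of "X \<union> Y"] hle[of "X \<inter> Y"] by linarith
    next
      case False then have "h Y = r (insert a Y) - k" using hcase by blast
      then show ?thesis using hX 2 hle[of "X \<union> Y"] hle[of "X \<inter> Y"] by linarith
    qed
  qed
  then show "hs r a k (X \<union> Y) + hs r a k (X \<inter> Y) \<le> hs r a k X + hs r a k Y" unfolding h_def .
qed

end



definition rep :: "nat \<Rightarrow> (nat \<Rightarrow> nat \<Rightarrow> real) \<Rightarrow> (nat \<Rightarrow> nat \<Rightarrow> real) \<Rightarrow> bool" where
  "rep N c f \<longleftrightarrow> (\<forall>i j. c i j \<noteq> 0 \<longrightarrow> i < N \<and> j < N) \<and>
     (\<forall>t u. f t u = (\<Sum>i<N. \<Sum>j<N. c i j * real (u choose j) * real (t choose i)))"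

definition PP :: "(nat \<Rightarrow> nat \<Rightarrow> real) \<Rightarrow> nat \<Rightarrow> real \<Rightarrow> real \<Rightarrow> real" where
  "PP c N x y = (\<Sum>i<N. \<Sum>j<N. c i j * (x - 1) ^ i * (y - 1) ^ j)"

lemma box_sum:
  fixes c :: "nat \<Rightarrow> nat \<Rightarrow> real" and g :: "nat \<Rightarrow> nat \<Rightarrow> real"
  assumes "\<forall>i j. c i j \<noteq> 0 \<longrightarrow> i < N \<and> j < N" "\<And>i j. c i j = 0 \<Longrightarrow> g i j = 0"
  shows "(\<Sum>(i, j)\<in>{(i, j). c i j \<noteq> 0}. g i j) = (\<Sum>i<N. \<Sum>j<N. g i j)"
proof -
  have sub: "{(i, j). c i j \<noteq> 0} \<subseteq> {..<N} \<times> {..<N}" using assms(1) by auto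
  have "(\<Sum>(i, j)\<in>{(i, j). c i j \<noteq> 0}. g i j) = (\<Sum>(i, j)\<in>{..<N} \<times> {..<N}. g i j)"
    by (rule sum.mono_neutral_left) (use sub assms(2) in \<open>auto simp: finite_SigmaI\<close>)
  also have "\<dots> = (\<Sum>i<N. \<Sum>j<N. g i j)" by (simp add: sum.cartesian_product)
  finally show ?thesis .
qed

lemma box_ext:
  fixes c :: "nat \<Rightarrow> nat \<Rightarrow> real" and g :: "nat \<Rightarrow> nat \<Rightarrow> real"
  assumes "\<forall>i j. c i j \<noteq> 0 \<longrightarrow> i < N \<and> j < N" "N \<le> M" "\<And>i j. c i j = 0 \<Longrightarrow> g i j = 0"
  shows "(\<Sum>i<M. \<Sum>j<M. g i j) = (\<Sum>i<N. \<Sum>j<N. g i j)"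
proof -
  have "\<forall>i j. c i j \<noteq> 0 \<longrightarrow> i < M \<and> j < M"
  proof (intro allI impI)
    fix i j assume "c i j \<noteq> 0" then show "i < M \<and> j < M" using assms(1,2) by (meson order_less_le_trans)
  qed
  then show ?thesis using box_sum[OF assms(1) assms(3)] box_sum[of c M g] assms(3) by simp
qed

lemma binom_unique:
  assumes fin: "finite S"
    and z: "\<And>t u. (\<Sum>(i, j)\<in>S. d i j * real (u choose j) * real (t choose i)) = 0"
  shows "\<forall>(i, j)\<in>S. d i j = 0"
proof (rule ccontr)
  assume "\<not> ?thesis"
  then have ne: "\<exists>p. p \<in> S \<and> d (fst p) (snd p) \<noteq> 0" by auto
  obtain p0 where p0: "p0 \<in> S \<and> d (fst p0) (snd p0) \<noteq> 0"
    and min: "\<And>q. q \<in> S \<and> d (fst q) (snd q) \<noteq> 0 \<Longrightarrow> fst p0 + snd p0 \<le> fst q + snd q"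
    using ex_has_least_nat[of "\<lambda>p. p \<in> S \<and> d (fst p) (snd p) \<noteq> 0" _ "\<lambda>p. fst p + snd p"] ne by blast
  obtain i0 j0 where pij: "p0 = (i0, j0)" by (cases p0)
  let ?g = "\<lambda>(i, j). d i j * real (j0 choose j) * real (i0 choose i)"
  have other: "?g q = 0" if "q \<in> S - {p0}" for q
  proof -
    obtain i j where q: "q = (i, j)" by (cases q)
    show ?thesis
    proof (cases "d i j = 0")
      case True then show ?thesis using q by simp
    next
      case False
      then have "i0 + j0 \<le> i + j" using min[of q] that q pij by auto
      moreover have "q \<noteq> p0" using that by auto
      ultimately have "i0 < i \<or> j0 < j" using q pij by auto
      then show ?thesis using q by auto
    qed
  qed
  have "0 = (\<Sum>q\<in>S. ?g q)" using z[where t=i0 and u=j0] by (simp add: case_prod_beta)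
  also have "\<dots> = ?g p0 + (\<Sum>q\<in>S - {p0}. ?g q)" using p0 fin by (simp add: sum.remove)
  also have "(\<Sum>q\<in>S - {p0}. ?g q) = 0" using other by (intro sum.neutral) auto
  finally show False using p0 pij by simp
qed

lemma Q_coeffs_eq:
  assumes "rep N c (\<lambda>t u. real (Q_count F P t u))"
  shows "Q_coeffs F P = c"
  unfolding Q_coeffs_def
proof (rule the_equality)
  have supp: "\<forall>i j. c i j \<noteq> 0 \<longrightarrow> i < N \<and> j < N" and eq: "\<And>t u. real (Q_count F P t u) =
      (\<Sum>i<N. \<Sum>j<N. c i j * real (u choose j) * real (t choose i))" using assms unfolding rep_def by auto
  have finc: "finite {(i, j). c i j \<noteq> 0}"
    by (rule finite_subset[of _ "{..<N} \<times> {..<N}"]) (use supp in auto)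
  show "finite {(i, j). c i j \<noteq> 0} \<and> (\<forall>t u. real (Q_count F P t u) =
      (\<Sum>(i, j)\<in>{(i, j). c i j \<noteq> 0}. c i j * real (u choose j) * real (t choose i)))"
    using finc eq box_sum[OF supp, where g = "\<lambda>i j. c i j * real (u choose j) * real (t choose i)" for t u]
    by auto
  fix c' assume c': "finite {(i, j). c' i j \<noteq> 0} \<and> (\<forall>t u. real (Q_count F P t u) =
      (\<Sum>(i, j)\<in>{(i, j). c' i j \<noteq> 0}. c' i j * real (u choose j) * real (t choose i)))"
  define S where "S = {(i, j). c i j \<noteq> 0} \<union> {(i, j). c' i j \<noteq> 0}"
  have finS: "finite S" using finc c' unfolding S_def by auto
  have ext: "(\<Sum>(i, j)\<in>{(i, j). e i j \<noteq> 0}. e i j * real (u choose j) * real (t choose i))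
      = (\<Sum>(i, j)\<in>S. e i j * real (u choose j) * real (t choose i))"
    if "{(i, j). e i j \<noteq> 0} \<subseteq> S" for e :: "nat \<Rightarrow> nat \<Rightarrow> real" and t u
    by (rule sum.mono_neutral_left) (use finS that in auto)
  have "(\<Sum>(i, j)\<in>S. (c' i j - c i j) * real (u choose j) * real (t choose i)) = 0" for t u
  proof -
    have "(\<Sum>(i, j)\<in>S. (c' i j - c i j) * real (u choose j) * real (t choose i)) =
      (\<Sum>(i, j)\<in>S. c' i j * real (u choose j) * real (t choose i)) -
      (\<Sum>(i, j)\<in>S. c i j * real (u choose j) * real (t choose i))"
      by (simp add: case_prod_beta sum_subtractf left_diff_distrib)
    also have "\<dots> = 0"
      using ext[of c' u t] ext[of c u t] c' eq box_sum[OF supp, where g = "\<lambda>i j. c i j * real (u choose j) * real (t choose i)"]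
      unfolding S_def by auto
    finally show ?thesis .
  qed
  then have "\<forall>(i, j)\<in>S. c' i j - c i j = 0" by (intro binom_unique[OF finS]) auto
  then show "c' = c" unfolding S_def by (auto simp: fun_eq_iff)
qed

lemma Q_prime_eq:
  assumes "rep N c (\<lambda>t u. real (Q_count F P t u))"
  shows "Q_prime F P x y = PP c N x y"
proof -
  have supp: "\<forall>i j. c i j \<noteq> 0 \<longrightarrow> i < N \<and> j < N" using assms unfolding rep_def by auto
  show ?thesis unfolding Q_prime_def Q_coeffs_eq[OF assms] PP_def
    by (rule box_sum[OF supp]) simp
qed



lemma repI: "(\<And>i j. c i j \<noteq> 0 \<Longrightarrow> i < N \<and> j < N) \<Longrightarrow>
  (\<And>t u. f t u = (\<Sum>i<N. \<Sum>j<N. c i j * real (u choose j) * real (t choose i))) \<Longrightarrow> rep N c f"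
  unfolding rep_def by auto

lemma rep_supp: "rep N c f \<Longrightarrow> c i j \<noteq> 0 \<Longrightarrow> i < N \<and> j < N" unfolding rep_def by auto

lemma rep_mono: assumes "rep N c f" "N \<le> M" shows "rep M c f"
proof -
  have supp: "\<forall>i j. c i j \<noteq> 0 \<longrightarrow> i < N \<and> j < N" using assms unfolding rep_def by auto
  have s2: "\<forall>i j. c i j \<noteq> 0 \<longrightarrow> i < M \<and> j < M"
  proof (intro allI impI)
    fix i j assume "c i j \<noteq> 0" then show "i < M \<and> j < M" using supp assms(2) by (meson order_less_le_trans)
  qed
  show ?thesis
    using s2 assms(1) box_ext[OF supp assms(2), where g = "\<lambda>i j. c i j * real (u choose j) * real (t choose i)" for t u]
    unfolding rep_def by simp
qed

lemma rep_zero: "rep N (\<lambda>_ _. 0) (\<lambda>_ _. 0)" unfolding rep_def by auto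

lemma rep_add: assumes "rep N c f" "rep N d g"
  shows "rep N (\<lambda>i j. c i j + d i j) (\<lambda>t u. f t u + g t u)"
proof (rule repI)
  fix i j assume "c i j + d i j \<noteq> 0"
  then have "c i j \<noteq> 0 \<or> d i j \<noteq> 0" by auto
  then show "i < N \<and> j < N" using rep_supp[OF assms(1)] rep_supp[OF assms(2)] by blast
next
  fix t u show "f t u + g t u = (\<Sum>i<N. \<Sum>j<N. (c i j + d i j) * real (u choose j) * real (t choose i))"
    using assms unfolding rep_def by (simp add: distrib_right sum.distrib)
qed

lemma rep_sum: assumes "finite K" "\<forall>k\<in>K. rep N (c k) (f k)"
  shows "rep N (\<lambda>i j. \<Sum>k\<in>K. c k i j) (\<lambda>t u. \<Sum>k\<in>K. f k t u)"
  using assms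
proof (induction K rule: finite_induct)
  case empty then show ?case using rep_zero by simp
next
  case (insert k K)
  then show ?case using rep_add[of N "c k" "f k"] by (simp add: sum.insert)
qed

lemma hockey: "(\<Sum>s<t. real (s choose i)) = real (t choose Suc i)"
proof (cases t)
  case 0 then show ?thesis by simp
next
  case (Suc n)
  have "(\<Sum>s<t. real (s choose i)) = real (\<Sum>s\<le>n. s choose i)" using Suc by (simp add: lessThan_Suc_atMost)
  also have "\<dots> = real (t choose Suc i)" using Suc sum_choose_upper by simp
  finally show ?thesis .
qed

lemma inner_drop:
  assumes "\<And>j. c j \<noteq> 0 \<Longrightarrow> j < N"
  shows "(\<Sum>j<Suc N. c j * h j) = (\<Sum>j<N. c j * (h j :: real))"
proof -
  have "c N = 0" using assms by auto
  then show ?thesis by simp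
qed

lemma rep_shift_t: assumes r: "rep N c f"
  shows "rep (Suc N) (\<lambda>i j. if i = 0 then 0 else c (i - 1) j) (\<lambda>t u. \<Sum>s<t. f s u)"
proof (rule repI)
  fix i j assume "(if i = 0 then 0 else c (i - 1) j) \<noteq> 0"
  then have "i \<noteq> 0" "c (i - 1) j \<noteq> 0" by (auto split: if_splits)
  then show "i < Suc N \<and> j < Suc N" using rep_supp[OF r, of "i - 1" j] by auto
next
  fix t u
  have eq: "f s u = (\<Sum>i<N. \<Sum>j<N. c i j * real (u choose j) * real (s choose i))" for s
    using r unfolding rep_def by auto
  have "(\<Sum>s<t. f s u) = (\<Sum>s<t. \<Sum>i<N. \<Sum>j<N. c i j * real (u choose j) * real (s choose i))"
    using eq by simp
  also have "\<dots> = (\<Sum>i<N. \<Sum>j<N. \<Sum>s<t. c i j * real (u choose j) * real (s choose i))"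
    by (subst sum.swap) (subst (2) sum.swap, rule refl)
  also have "\<dots> = (\<Sum>i<N. \<Sum>j<N. c i j * real (u choose j) * real (t choose Suc i))"
  proof (intro sum.cong refl)
    fix i j
    have "(\<Sum>s<t. c i j * real (u choose j) * real (s choose i)) = c i j * real (u choose j) * (\<Sum>s<t. real (s choose i))"
      by (simp add: sum_distrib_left)
    then show "(\<Sum>s<t. c i j * real (u choose j) * real (s choose i)) = c i j * real (u choose j) * real (t choose Suc i)"
      using hockey by simp
  qed
  also have "\<dots> = (\<Sum>i<N. \<Sum>j<Suc N. c i j * (real (u choose j) * real (t choose Suc i)))"
  proof (rule sum.cong[OF refl])
    fix i
    show "(\<Sum>j<N. c i j * real (u choose j) * real (t choose Suc i)) = (\<Sum>j<Suc N. c i j * (real (u choose j) * real (t choose Suc i)))"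
      by (subst inner_drop[where c = "c i"]) (use rep_supp[OF r, of i] in \<open>auto simp: mult.assoc\<close>)
  qed
  also have "\<dots> = (\<Sum>i<Suc N. \<Sum>j<Suc N. (if i = 0 then 0 else c (i - 1) j) * real (u choose j) * real (t choose i))"
    by (subst sum.lessThan_Suc_shift) (simp add: mult.assoc)
  finally show "(\<Sum>s<t. f s u) = (\<Sum>i<Suc N. \<Sum>j<Suc N. (if i = 0 then 0 else c (i - 1) j) * real (u choose j) * real (t choose i))" .
qed

lemma rep_shift_u: assumes r: "rep N c f"
  shows "rep (Suc N) (\<lambda>i j. if j = 0 then 0 else c i (j - 1)) (\<lambda>t u. \<Sum>s<u. f t s)"
proof (rule repI)
  fix i j assume "(if j = 0 then 0 else c i (j - 1)) \<noteq> 0"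
  then have "j \<noteq> 0" "c i (j - 1) \<noteq> 0" by (auto split: if_splits)
  then show "i < Suc N \<and> j < Suc N" using rep_supp[OF r, of i "j - 1"] by auto
next
  fix t u
  have eq: "f t s = (\<Sum>i<N. \<Sum>j<N. c i j * real (s choose j) * real (t choose i))" for s
    using r unfolding rep_def by auto
  have "(\<Sum>s<u. f t s) = (\<Sum>s<u. \<Sum>i<N. \<Sum>j<N. c i j * real (s choose j) * real (t choose i))"
    using eq by simp
  also have "\<dots> = (\<Sum>i<N. \<Sum>j<N. \<Sum>s<u. c i j * real (s choose j) * real (t choose i))"
    by (subst sum.swap) (subst (2) sum.swap, rule refl)
  also have "\<dots> = (\<Sum>i<N. \<Sum>j<N. c i j * real (u choose Suc j) * real (t choose i))"
  proof (intro sum.cong refl)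
    fix i j
    have "(\<Sum>s<u. c i j * real (s choose j) * real (t choose i)) = c i j * real (t choose i) * (\<Sum>s<u. real (s choose j))"
      by (simp add: sum_distrib_left mult_ac)
    then show "(\<Sum>s<u. c i j * real (s choose j) * real (t choose i)) = c i j * real (u choose Suc j) * real (t choose i)"
      using hockey by (simp add: mult_ac)
  qed
  also have "\<dots> = (\<Sum>i<N. \<Sum>j<Suc N. (if j = 0 then 0 else c i (j - 1)) * real (u choose j) * real (t choose i))"
    by (subst sum.lessThan_Suc_shift) simp
  also have "\<dots> = (\<Sum>i<Suc N. \<Sum>j<Suc N. (if j = 0 then 0 else c i (j - 1)) * real (u choose j) * real (t choose i))"
  proof -
    have cN: "c N j = 0" for j using rep_supp[OF r, of N j] by auto
    have z: "(if j = 0 then 0 else c N (j - 1)) = 0" for j using cN by auto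
    show ?thesis by (simp only: sum.lessThan_Suc z mult_zero_left sum.neutral_const add_0_right)
  qed
  finally show "(\<Sum>s<u. f t s) = (\<Sum>i<Suc N. \<Sum>j<Suc N. (if j = 0 then 0 else c i (j - 1)) * real (u choose j) * real (t choose i))" .
qed

lemma PP_mono:
  assumes "\<forall>i j. c i j \<noteq> 0 \<longrightarrow> i < N \<and> j < N" "N \<le> M"
  shows "PP c M x y = PP c N x y"
  unfolding PP_def by (rule box_ext[OF assms]) simp

lemma PP_add: "PP (\<lambda>i j. c i j + d i j) N x y = PP c N x y + PP d N x y"
  unfolding PP_def by (simp add: distrib_right sum.distrib)

lemma PP_sum: "finite K \<Longrightarrow> PP (\<lambda>i j. \<Sum>k\<in>K. c k i j) N x y = (\<Sum>k\<in>K. PP (c k) N x y)"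
proof (induction K rule: finite_induct)
  case empty then show ?case unfolding PP_def by simp
next
  case (insert k K)
  then show ?case using PP_add[of "c k" "\<lambda>i j. \<Sum>k\<in>K. c k i j" N x y] by (simp add: sum.insert)
qed

lemma PP_shift_t:
  assumes supp: "\<forall>i j. c i j \<noteq> 0 \<longrightarrow> i < N \<and> j < N"
  shows "PP (\<lambda>i j. if i = 0 then 0 else c (i - 1) j) (Suc N) x y = (x - 1) * PP c N x y"
proof -
  have "PP (\<lambda>i j. if i = 0 then 0 else c (i - 1) j) (Suc N) x y
      = (\<Sum>i<N. \<Sum>j<Suc N. c i j * ((x - 1) ^ Suc i * (y - 1) ^ j))"
    unfolding PP_def by (subst sum.lessThan_Suc_shift) (simp add: mult.assoc)
  also have "\<dots> = (\<Sum>i<N. \<Sum>j<N. c i j * ((x - 1) ^ Suc i * (y - 1) ^ j))"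
    by (intro sum.cong refl inner_drop) (use supp in auto)
  also have "\<dots> = (x - 1) * PP c N x y"
    unfolding PP_def by (simp add: sum_distrib_left mult_ac)
  finally show ?thesis .
qed

lemma PP_shift_u:
  assumes supp: "\<forall>i j. c i j \<noteq> 0 \<longrightarrow> i < N \<and> j < N"
  shows "PP (\<lambda>i j. if j = 0 then 0 else c i (j - 1)) (Suc N) x y = (y - 1) * PP c N x y"
proof -
  have cN: "c N j = 0" for j using supp by auto
  have "PP (\<lambda>i j. if j = 0 then 0 else c i (j - 1)) (Suc N) x y
      = (\<Sum>i<N. \<Sum>j<N. c i j * (x - 1) ^ i * (y - 1) ^ Suc j)"
  proof -
    have "PP (\<lambda>i j. if j = 0 then 0 else c i (j - 1)) (Suc N) x y
       = (\<Sum>i<Suc N. \<Sum>j<N. c i j * (x - 1) ^ i * (y - 1) ^ Suc j)"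
      unfolding PP_def
    proof (rule sum.cong[OF refl])
      fix i show "(\<Sum>j<Suc N. (if j = 0 then 0 else c i (j - 1)) * (x - 1) ^ i * (y - 1) ^ j) =
        (\<Sum>j<N. c i j * (x - 1) ^ i * (y - 1) ^ Suc j)"
        by (subst sum.lessThan_Suc_shift) simp
    qed
    also have "\<dots> = (\<Sum>i<N. \<Sum>j<N. c i j * (x - 1) ^ i * (y - 1) ^ Suc j)"
      by (simp add: cN)
    finally show ?thesis .
  qed
  also have "\<dots> = (y - 1) * PP c N x y"
    unfolding PP_def by (simp add: sum_distrib_left mult_ac)
  finally show ?thesis .
qed



context setting
begin

lemma bij_mid:
  assumes "lo \<le> k" "k \<le> hi"
  shows "bij_betw (\<lambda>z. z(a:=0)) {z\<in>BZ E (Fn E r t u). z a = k} (BZ E' (Fn E' (hs r a k) t u))"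
proof (rule fiber_bij[OF fin aE refl E'ne])
  fix S assume S: "S \<subseteq> E'" "S \<noteq> {}" "S \<noteq> E'"
  show "Fn E' (hs r a k) t u S = min (Fn E r t u S) (Fn E r t u (insert a S) - k)"
    using S unfolding GS[OF S(2,3)] FnS[OF S(1,2)] FnaS[OF S(1,3)] hs_def by auto
next
  show "0 \<le> Fn E r t u {}" using Fn0 by simp
  show "Fn E' (hs r a k) t u {} = 0" using G0 assms by simp
  show "0 \<le> Fn E r t u {a} - k" using Fna assms by simp
  show "Fn E' (hs r a k) t u E' = Fn E r t u E - k" using GE' FnE assms by auto
  show "Fn E r t u E - k \<le> Fn E r t u E'" using FnE FnE' assms by auto
qed

lemma linear_proj: "linear (proj_away a)"
  by (rule linearI) (auto simp: proj_away_def vec_eq_iff)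

lemma proj_int_vec: "proj_away a (int_vec z) = int_vec (z(a:=0))"
  by (auto simp: proj_away_def int_vec_def vec_eq_iff)

lemma slice_eq:
  assumes "lo \<le> k" "k \<le> hi"
  shows "slice_polytope E r a k = base_polytope E' (hs r a k)"
proof -
  have img: "(\<lambda>z. z(a:=0)) ` {x \<in> pm_bases E r. x a = k} = pm_bases E' (hs r a k)"
    using bij_betw_imp_surj_on[OF bij_mid[OF assms, of 0 0]] by (simp add: Fn00 pm_bases_BZ)
  have "slice_polytope E r a k = convex hull (proj_away a ` int_vec ` {x \<in> pm_bases E r. x a = k})"
    unfolding slice_polytope_def by (rule convex_hull_linear_image[OF linear_proj])
  also have "proj_away a ` int_vec ` {x \<in> pm_bases E r. x a = k} = int_vec ` pm_bases E' (hs r a k)"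
    unfolding img[symmetric] image_image proj_int_vec by simp
  finally show ?thesis unfolding base_polytope_def .
qed

end

lemma BZ_single:
  assumes "F {} \<ge> 0"
  shows "BZ {e} F = {(\<lambda>j. if j = e then F {e} else 0)}"
proof
  show "BZ {e} F \<subseteq> {(\<lambda>j. if j = e then F {e} else 0)}"
    unfolding BZ_def by (auto simp: fun_eq_iff)
  show "{(\<lambda>j. if j = e then F {e} else 0)} \<subseteq> BZ {e} F"
    unfolding BZ_def using assms by (auto simp: subset_singleton_iff)
qed

lemma common_N:
  assumes "finite K" "\<forall>k\<in>K. \<exists>N c. rep N c (f k)"
  shows "\<exists>N. \<forall>k\<in>K. \<exists>c. rep N c (f k)"
  using assms
proof (induction K rule: finite_induct)
  case empty then show ?case by auto
next
  case (insert k K)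
  then obtain N1 where N1: "\<forall>k\<in>K. \<exists>c. rep N1 c (f k)" by auto
  obtain N2 c2 where N2: "rep N2 c2 (f k)" using insert by auto
  have "\<forall>k'\<in>insert k K. \<exists>c. rep (max N1 N2) c (f k')"
    using N1 N2 rep_mono[of _ _ _ "max N1 N2"] by fastforce
  then show ?case by blast
qed

lemma card_ge2:
  fixes E :: "'a::finite set"
  assumes "E \<noteq> {}" "card E \<noteq> 1" shows "2 \<le> card E"
proof -
  have "card E \<noteq> 0" using assms by simp
  then show ?thesis using assms by linarith
qed

lemma poly_exists:
  "\<forall>(E :: 'a::finite set) r. card E = n \<longrightarrow> polymatroid E r \<longrightarrow> E \<noteq> {} \<longrightarrow>
     (\<exists>N c. rep N c (\<lambda>t u. real (card (BZ E (Fn E r t u)))))"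
proof (induction n rule: less_induct)
  case (less n)
  show ?case
  proof (intro allI impI)
    fix E :: "'a set" and r assume cEn: "card E = n" and pm: "polymatroid E r" and ne: "E \<noteq> {}"
    show "\<exists>N c. rep N c (\<lambda>t u. real (card (BZ E (Fn E r t u))))"
    proof (cases "card E = 1")
      case True
      then obtain e where e: "E = {e}" by (auto simp: card_1_singleton_iff)
      have r0: "r {} = 0" using pm unfolding polymatroid_def by auto
      have "card (BZ E (Fn E r t u)) = 1" for t u
        using BZ_single[of "Fn E r t u" e] Fn_empty[of E r t u, OF ne r0] e by simp
      then have "rep 1 (\<lambda>i j. if i = 0 \<and> j = 0 then 1 else 0) (\<lambda>t u. real (card (BZ E (Fn E r t u))))"
        by (intro repI) (auto split: if_splits)
      then show ?thesis by blast
    next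
      case False
      obtain a where aE: "a \<in> E" using ne by auto
      interpret setting E r a using pm card_ge2[OF ne False] aE by unfold_locales auto
      define g where "g k t u = real (card (BZ E' (Fn E' (hs r a k) t u)))" for k t u
      have IH: "\<forall>k\<in>{lo..hi}. \<exists>N c. rep N c (g k)"
      proof
        fix k assume k: "k \<in> {lo..hi}"
        have "card E' < n"
      proof -
        have "card E' = card E - 1" using aE by (simp add: card_Diff_singleton)
        then show ?thesis using cEn card_ge2[OF ne False] by linarith
      qed
        then show "\<exists>N c. rep N c (g k)"
          using less.IH[of "card E'"] hs_polymatroid[of k] k E'ne unfolding g_def by auto
      qed
      obtain N where "\<forall>k\<in>{lo..hi}. \<exists>c. rep N c (g k)" using common_N[OF _ IH] by auto
      then obtain C where C: "\<forall>k\<in>{lo..hi}. rep N (C k) (g k)" by metis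
      have lohi_in: "lo \<in> {lo..hi}" "hi \<in> {lo..hi}" using lohi by auto
      have r1: "rep (Suc N) (\<lambda>i j. if i = 0 then 0 else C lo (i - 1) j) (\<lambda>t u. \<Sum>s<t. g lo s u)"
        using rep_shift_t C lohi_in by blast
      have r2: "rep (Suc N) (\<lambda>i j. if j = 0 then 0 else C hi i (j - 1)) (\<lambda>t u. \<Sum>s<u. g hi t s)"
        using rep_shift_u C lohi_in by blast
      have r3: "rep (Suc N) (\<lambda>i j. \<Sum>k\<in>{lo..hi}. C k i j) (\<lambda>t u. \<Sum>k\<in>{lo..hi}. g k t u)"
        using rep_mono[OF rep_sum[OF _ C]] by auto
      have feq: "(\<lambda>t u. real (card (BZ E (Fn E r t u)))) =
          (\<lambda>t u. (\<Sum>s<t. g lo s u) + (\<Sum>s<u. g hi t s) + (\<Sum>k\<in>{lo..hi}. g k t u))"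
        unfolding g_def by (simp add: recursion)
      show ?thesis unfolding feq using rep_add[OF rep_add[OF r1 r2] r3] by blast
    qed
  qed
qed

lemma nonempty_BZ:
  "\<forall>(E :: 'a::finite set) r. card E = n \<longrightarrow> polymatroid E r \<longrightarrow> E \<noteq> {} \<longrightarrow> BZ E r \<noteq> {}"
proof (induction n rule: less_induct)
  case (less n)
  show ?case
  proof (intro allI impI)
    fix E :: "'a set" and r assume cEn: "card E = n" and pm: "polymatroid E r" and ne: "E \<noteq> {}"
    show "BZ E r \<noteq> {}"
    proof (cases "card E = 1")
      case True
      then obtain e where e: "E = {e}" by (auto simp: card_1_singleton_iff)
      have r0: "r {} = 0" using pm unfolding polymatroid_def by auto
      then show ?thesis using BZ_single[of r e] e by simp
    next
      case False
      obtain a where aE: "a \<in> E" using ne by auto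
      interpret setting E r a using pm card_ge2[OF ne False] aE by unfold_locales auto
      have "card E' < n"
      proof -
        have "card E' = card E - 1" using aE by (simp add: card_Diff_singleton)
        then show ?thesis using cEn card_ge2[OF ne False] by linarith
      qed
      then have "BZ E' (hs r a lo) \<noteq> {}"
        using less.IH[of "card E'"] hs_polymatroid[of lo] lohi E'ne by auto
      then have pos: "0 < card (BZ E' (Fn E' (hs r a lo) 0 0))" using finite_BZ by (simp add: Fn00 card_gt_0_iff)
      have "card (BZ E' (Fn E' (hs r a lo) 0 0)) \<le> (\<Sum>k\<in>{lo..hi}. card (BZ E' (Fn E' (hs r a k) 0 0)))"
        by (rule member_le_sum) (use lohi in auto)
      then have "0 < card (BZ E (Fn E r 0 0))" using recursion[of 0 0] pos by simp
      then show ?thesis by (auto simp: Fn00)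
    qed
  qed
qed

context setting
begin

lemma base_at:
  assumes "lo \<le> k" "k \<le> hi"
  shows "\<exists>b\<in>pm_bases E r. b a = k"
proof -
  have "BZ E' (hs r a k) \<noteq> {}"
    using nonempty_BZ hs_polymatroid[OF assms] E'ne by blast
  then obtain y where "y \<in> BZ E' (Fn E' (hs r a k) 0 0)" by (auto simp: Fn00)
  then obtain z where "z \<in> {z\<in>BZ E (Fn E r 0 0). z a = k}"
    using bij_betw_imp_surj_on[OF bij_mid[OF assms, of 0 0]] by auto
  then show ?thesis by (auto simp: Fn00 pm_bases_BZ)
qed

lemma coord_bounds:
  assumes "p \<in> base_polytope E r"
  shows "real_of_int lo \<le> p $ a" "p $ a \<le> real_of_int hi"
proof -
  have "(\<Sum>i\<in>E. p$i) = p$a + (\<Sum>i\<in>E'. p$i)" using aE by (simp add: sum.remove)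
  moreover have "(\<Sum>i\<in>E. p$i) = r E" "(\<Sum>i\<in>E'. p$i) \<le> r E'" using Pfacts[OF assms] by auto
  ultimately show "real_of_int lo \<le> p $ a" by simp
  have "(\<Sum>i\<in>{a}. p$i) \<le> r {a}" using Pfacts(1)[OF assms, of "{a}"] aE by auto
  then show "p $ a \<le> real_of_int hi" by simp
qed

lemma klo_eq:
  assumes "\<exists>p\<in>base_polytope E r. p $ a = real_of_int klo"
    and "\<forall>p\<in>base_polytope E r. real_of_int klo \<le> p $ a"
  shows "klo = lo"
proof -
  obtain b where b: "b \<in> pm_bases E r" "b a = lo" using base_at[of lo] lohi by auto
  have "int_vec b \<in> base_polytope E r" unfolding base_polytope_def using b by (auto intro: hull_inc)
  then have "real_of_int klo \<le> real_of_int lo" using assms(2) b(2) by (auto simp: int_vec_def)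
  moreover have "real_of_int lo \<le> real_of_int klo"
  proof -
    obtain p where "p \<in> base_polytope E r" "p $ a = real_of_int klo" using assms(1) by auto
    then show ?thesis using coord_bounds(1)[of p] by simp
  qed
  ultimately show ?thesis by linarith
qed

lemma khi_eq:
  assumes "\<exists>p\<in>base_polytope E r. p $ a = real_of_int khi"
    and "\<forall>p\<in>base_polytope E r. p $ a \<le> real_of_int khi"
  shows "khi = hi"
proof -
  obtain b where b: "b \<in> pm_bases E r" "b a = hi" using base_at[of hi] lohi by auto
  have "int_vec b \<in> base_polytope E r" unfolding base_polytope_def using b by (auto intro: hull_inc)
  then have "real_of_int hi \<le> real_of_int khi" using assms(2) b(2) by (auto simp: int_vec_def)
  moreover have "real_of_int khi \<le> real_of_int hi"
  proof -
    obtain p where "p \<in> base_polytope E r" "p $ a = real_of_int khi" using assms(1) by auto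
    then show ?thesis using coord_bounds(2)[of p] by simp
  qed
  ultimately show ?thesis by linarith
qed

end



theorem mainTheorem14:
  fixes E :: "'a::finite set" and r :: "'a set \<Rightarrow> int" and a :: 'a
    and klo khi :: int and x y :: real
  assumes "polymatroid E r" and "card E \<ge> 2" and "a \<in> E"
    and "\<exists>p\<in>base_polytope E r. p $ a = real_of_int klo"
    and "\<forall>p\<in>base_polytope E r. real_of_int klo \<le> p $ a"
    and "\<exists>p\<in>base_polytope E r. p $ a = real_of_int khi"
    and "\<forall>p\<in>base_polytope E r. p $ a \<le> real_of_int khi"
  shows "Q_prime E (base_polytope E r) x y =
           (x - 1) * Q_prime (E - {a}) (slice_polytope E r a klo) x y
         + (y - 1) * Q_prime (E - {a}) (slice_polytope E r a khi) x y
         + (\<Sum>k = klo..khi. Q_prime (E - {a}) (slice_polytope E r a k) x y)"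
proof -
  interpret setting E r a using assms(1-3) by unfold_locales auto
  have klo: "klo = lo" using klo_eq assms(4,5) by blast
  have khi: "khi = hi" using khi_eq assms(6,7) by blast
  define g where "g k t u = real (card (BZ E' (Fn E' (hs r a k) t u)))" for k t u
  have IH: "\<forall>k\<in>{lo..hi}. \<exists>N c. rep N c (g k)"
  proof
    fix k assume k: "k \<in> {lo..hi}"
    show "\<exists>N c. rep N c (g k)"
      using poly_exists[of "card E'"] hs_polymatroid[of k] k E'ne unfolding g_def by auto
  qed
  obtain N where "\<forall>k\<in>{lo..hi}. \<exists>c. rep N c (g k)" using common_N[OF _ IH] by auto
  then obtain C where C: "\<forall>k\<in>{lo..hi}. rep N (C k) (g k)" by metis
  have lohi_in: "lo \<in> {lo..hi}" "hi \<in> {lo..hi}" using lohi by auto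
  have gQ: "g k = (\<lambda>t u. real (Q_count E' (slice_polytope E r a k) t u))" if "k \<in> {lo..hi}" for k
    using that slice_eq[of k] Q_count_BZ[OF hs_polymatroid[of k] E'ne] unfolding g_def by (auto simp: fun_eq_iff)
  have Qk: "Q_prime E' (slice_polytope E r a k) x y = PP (C k) N x y" if "k \<in> {lo..hi}" for k
  proof -
    have "rep N (C k) (g k)" using C that by auto
    then have "rep N (C k) (\<lambda>t u. real (Q_count E' (slice_polytope E r a k) t u))" using gQ[OF that] by simp
    then show ?thesis by (rule Q_prime_eq)
  qed
  have supp: "\<forall>i j. C k i j \<noteq> 0 \<longrightarrow> i < N \<and> j < N" if "k \<in> {lo..hi}" for k
    using rep_supp[of N "C k" "g k"] C that by auto
  have r1: "rep (Suc N) (\<lambda>i j. if i = 0 then 0 else C lo (i - 1) j) (\<lambda>t u. \<Sum>s<t. g lo s u)"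
    using rep_shift_t C lohi_in by blast
  have r2: "rep (Suc N) (\<lambda>i j. if j = 0 then 0 else C hi i (j - 1)) (\<lambda>t u. \<Sum>s<u. g hi t s)"
    using rep_shift_u C lohi_in by blast
  have r3: "rep (Suc N) (\<lambda>i j. \<Sum>k\<in>{lo..hi}. C k i j) (\<lambda>t u. \<Sum>k\<in>{lo..hi}. g k t u)"
    using rep_mono[OF rep_sum[OF _ C]] by auto
  have feq: "(\<lambda>t u. real (Q_count E (base_polytope E r) t u)) =
      (\<lambda>t u. (\<Sum>s<t. g lo s u) + (\<Sum>s<u. g hi t s) + (\<Sum>k\<in>{lo..hi}. g k t u))"
    unfolding g_def Q_count_BZ[OF pm Ene] by (simp add: recursion)
  have rM: "rep (Suc N) (\<lambda>i j. ((if i = 0 then 0 else C lo (i - 1) j) + (if j = 0 then 0 else C hi i (j - 1)))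
      + (\<Sum>k\<in>{lo..hi}. C k i j)) (\<lambda>t u. real (Q_count E (base_polytope E r) t u))"
    unfolding feq using rep_add[OF rep_add[OF r1 r2] r3] .
  have "Q_prime E (base_polytope E r) x y =
      PP (\<lambda>i j. ((if i = 0 then 0 else C lo (i - 1) j) + (if j = 0 then 0 else C hi i (j - 1)))
      + (\<Sum>k\<in>{lo..hi}. C k i j)) (Suc N) x y"
    by (rule Q_prime_eq[OF rM])
  also have "\<dots> = (x - 1) * PP (C lo) N x y + (y - 1) * PP (C hi) N x y + (\<Sum>k\<in>{lo..hi}. PP (C k) (Suc N) x y)"
    unfolding PP_add PP_sum[OF finite_atLeastAtMost_int]
    using PP_shift_t[OF supp[OF lohi_in(1)]] PP_shift_u[OF supp[OF lohi_in(2)]] by simp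
  also have "(\<Sum>k\<in>{lo..hi}. PP (C k) (Suc N) x y) = (\<Sum>k\<in>{lo..hi}. Q_prime E' (slice_polytope E r a k) x y)"
    using PP_mono[OF supp, of _ "Suc N"] Qk by (intro sum.cong) auto
  finally show ?thesis using Qk lohi_in klo khi by simp
qed


end
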